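(* Let $X$ be a topological space with $|X|\ge 2$, $G$ an infinite Abelian group, and $f\colon G\to X$ a Korovin mapping. Then the Korovin orbit $G_f$ is a $T_3$-space if and only if $X$ is a $T_3$-space.
   Context: $X^G$ carries the product topology. For $f\in X^G$ and $g\in G$ let $gf\in X^G$ be given by $(gf)(x)=f(xg)$, and let $G_f=\{gf:g\in G\}\subseteq X^G$ with the subspace topology. The map $f\colon G\to X$ is a Korovin mapping if $\pi_M(G_f)=X^M$ for every countable $M\subseteq G$, where $\pi_M\colon X^G\to X^M$ is the projection; in that case $G_f$ is called a Korovin orbit. A space is $T_3$ if every open neighborhood $U$ of a point $x$ contains an open neighborhood $V$ of $x$ with $\overline{V}\subseteq U$ (no $T_1$ assumed). *)

theory Defs
  imports "HOL-Analysis.Analysis"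
begin

text \<open>The group G is written additively (type class ab_group_add); the action is
  (g f)(x) = f(x + g).\<close>

definition shift_fun :: "'g::ab_group_add \<Rightarrow> ('g \<Rightarrow> 'a) \<Rightarrow> ('g \<Rightarrow> 'a)" where
  "shift_fun g f = (\<lambda>x. f (x + g))"

definition orbit_set :: "('g::ab_group_add \<Rightarrow> 'a) \<Rightarrow> ('g \<Rightarrow> 'a) set" where
  "orbit_set f = {shift_fun g f | g. True}"

definition orbit_space :: "'a topology \<Rightarrow> ('g::ab_group_add \<Rightarrow> 'a) \<Rightarrow> ('g \<Rightarrow> 'a) topology" where
  "orbit_space X f = subtopology (product_topology (\<lambda>_. X) UNIV) (orbit_set f)"

definition korovin_mapping :: "'a topology \<Rightarrow> ('g::ab_group_add \<Rightarrow> 'a) \<Rightarrow> bool" where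
  "korovin_mapping X f \<longleftrightarrow> (\<forall>x. f x \<in> topspace X) \<and>
     (\<forall>M. countable M \<longrightarrow> (\<lambda>h. restrict h M) ` orbit_set f = PiE M (\<lambda>_. topspace X))"

text \<open>T_3 (no T_1 assumed): every open neighbourhood of a point contains an open
  neighbourhood whose closure lies inside it.\<close>
definition T3_space :: "'a topology \<Rightarrow> bool" where
  "T3_space X \<longleftrightarrow> (\<forall>x U. openin X U \<and> x \<in> U \<longrightarrow>
      (\<exists>V. openin X V \<and> x \<in> V \<and> X closure_of V \<subseteq> U))"

end

theory Submission
  imports Defs
begin

lemma T3_imp_nb:
  assumes A: "T3_space X"
  shows "neighbourhood_base_of (closedin X) X"
  unfolding neighbourhood_base_of
proof (intro allI impI)
  fix W x assume B: "openin X W \<and> x \<in> W"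
  obtain V where V: "openin X V" "x \<in> V" "X closure_of V \<subseteq> W"
    using A[unfolded T3_space_def, rule_format, OF B] by blast
  have "V \<subseteq> X closure_of V" by (rule closure_of_subset[OF openin_subset[OF V(1)]])
  moreover have "closedin X (X closure_of V)" by (rule closedin_closure_of)
  ultimately show "\<exists>U V. openin X U \<and> closedin X V \<and> x \<in> U \<and> U \<subseteq> V \<and> V \<subseteq> W"
    using V by blast
qed

lemma nb_imp_T3:
  assumes A: "neighbourhood_base_of (closedin X) X"
  shows "T3_space X"
  unfolding T3_space_def
proof (intro allI impI)
  fix x W assume B: "openin X W \<and> x \<in> W"
  obtain U V where UV: "openin X U" "closedin X V" "x \<in> U" "U \<subseteq> V" "V \<subseteq> W"
    using A[unfolded neighbourhood_base_of, rule_format, OF B] by blast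
  have "X closure_of U \<subseteq> V" by (rule closure_of_minimal[OF UV(4) UV(2)])
  then show "\<exists>V. openin X V \<and> x \<in> V \<and> X closure_of V \<subseteq> W"
    using UV by blast
qed

lemma T3_iff_regular: "T3_space X \<longleftrightarrow> regular_space X"
  using T3_imp_nb nb_imp_T3 neighbourhood_base_of_closedin by blast

lemma orbit_topspace:
  assumes "korovin_mapping X f" "h \<in> orbit_set f"
  shows "h i \<in> topspace X"
  using assms unfolding korovin_mapping_def orbit_set_def shift_fun_def by auto

lemma korovin_exists:
  assumes "korovin_mapping X f" "countable M" "\<And>i. i \<in> M \<Longrightarrow> t i \<in> topspace X"
  shows "\<exists>r \<in> orbit_set f. \<forall>i\<in>M. r i = t i"
proof -
  have "restrict t M \<in> PiE M (\<lambda>_. topspace X)" using assms(3) by auto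
  moreover have "(\<lambda>h. restrict h M) ` orbit_set f = PiE M (\<lambda>_. topspace X)"
    using assms(1,2) unfolding korovin_mapping_def by simp
  ultimately obtain r where "r \<in> orbit_set f" "restrict r M = restrict t M"
    by (metis (no_types, lifting) imageE)
  moreover have "r i = t i" if "i \<in> M" "restrict r M = restrict t M" for r i
    using that by (metis restrict_apply)
  ultimately show ?thesis by blast
qed

theorem proposition4p4:
  fixes X :: "'a topology" and f :: "'g::ab_group_add \<Rightarrow> 'a"
  assumes "\<exists>a b. a \<in> topspace X \<and> b \<in> topspace X \<and> a \<noteq> b"
    and "infinite (UNIV :: 'g set)"
    and "korovin_mapping X f"
  shows "T3_space (orbit_space X f) \<longleftrightarrow> T3_space X"
proof
  assume "T3_space X"
  then show "T3_space (orbit_space X f)"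
    unfolding T3_iff_regular orbit_space_def
    by (simp add: regular_space_product_topology regular_space_subtopology)
next
  assume T: "T3_space (orbit_space X f)"
  let ?O = "orbit_set f"
  let ?P = "product_topology (\<lambda>_::'g. X) UNIV"
  have K: "korovin_mapping X f" by fact
  show "T3_space X"
    unfolding T3_space_def
  proof (intro allI impI)
    fix x U assume xU: "openin X U \<and> x \<in> U"
    have "x \<in> topspace X" using xU openin_subset by blast
    have "\<exists>r\<in>?O. \<forall>i\<in>{0}. r i = x"
      by (rule korovin_exists[OF K]) (simp_all add: \<open>x \<in> topspace X\<close>)
    then obtain p where p: "p \<in> ?O" "p 0 = x" by blast
    define W where "W = {h \<in> topspace ?P. h 0 \<in> U} \<inter> ?O"
    have "openin ?P {h \<in> topspace ?P. h 0 \<in> U}"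
      using openin_continuous_map_preimage[OF continuous_map_product_projection[of 0 UNIV "\<lambda>_. X"]] xU
      by blast
    then have Wo: "openin (orbit_space X f) W"
      unfolding W_def orbit_space_def openin_subtopology by blast
    have "p \<in> W" unfolding W_def using p xU orbit_topspace[OF K p(1)] by (simp add: PiE_iff)
    then obtain V where V: "openin (orbit_space X f) V" "p \<in> V" "orbit_space X f closure_of V \<subseteq> W"
      using T[unfolded T3_space_def, rule_format, OF conjI[OF Wo \<open>p \<in> W\<close>]] by blast
    then obtain T0 where T0: "openin ?P T0" "V = T0 \<inter> ?O"
      unfolding orbit_space_def openin_subtopology by blast
    have "p \<in> T0" using V(2) T0(2) by blast
    have Hp: "\<forall>z\<in>T0. \<exists>U. finite {i. U i \<noteq> topspace X} \<and> (\<forall>i. openin X (U i)) \<and> z \<in> PiE UNIV U \<and> PiE UNIV U \<subseteq> T0"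
      using T0(1) by (simp add: openin_product_topology_alt)
    then obtain Uf where Uf: "finite {i. Uf i \<noteq> topspace X}" "\<And>i. openin X (Uf i)"
      "p \<in> PiE UNIV Uf" "PiE UNIV Uf \<subseteq> T0"
        using Hp[rule_format, OF \<open>p \<in> T0\<close>] by blast
    define F where "F = {i. Uf i \<noteq> topspace X}"
    show "\<exists>V. openin X V \<and> x \<in> V \<and> X closure_of V \<subseteq> U"
    proof (intro exI conjI)
      show "openin X (Uf 0)" by (rule Uf(2))
      have "p 0 \<in> Uf 0" using Uf(3) by (simp add: PiE_iff)
      then show "x \<in> Uf 0" using p(2) by simp
      show "X closure_of Uf 0 \<subseteq> U"
      proof
        fix y assume y: "y \<in> X closure_of Uf 0"
        have yt: "y \<in> topspace X" using y closure_of_subset_topspace[of X "Uf 0"] by blast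
        have cF: "countable (F \<union> {0})" using Uf(1) F_def by (simp add: countable_finite)
        have tq: "(if i = 0 then y else p i) \<in> topspace X" for i
          using yt orbit_topspace[OF K p(1)] by simp
        have "\<exists>r\<in>?O. \<forall>i\<in>F \<union> {0}. r i = (if i = 0 then y else p i)"
          by (rule korovin_exists[OF K cF]) (rule tq)
        then obtain q where q1: "q \<in> ?O" and q2: "\<forall>i\<in>F \<union> {0}. q i = (if i = 0 then y else p i)"
          by blast
        have q: "q \<in> ?O" "\<And>i. i \<in> F \<union> {0} \<Longrightarrow> q i = (if i = 0 then y else p i)"
          using q1 q2 by auto
        have "q \<in> orbit_space X f closure_of V"
          unfolding in_closure_of
        proof (intro conjI allI impI)
          show "q \<in> topspace (orbit_space X f)"
            using q orbit_topspace[OF K] unfolding orbit_space_def by auto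
          fix Ob assume Ob: "q \<in> Ob \<and> openin (orbit_space X f) Ob"
          then obtain O' where O': "openin ?P O'" "Ob = O' \<inter> ?O"
            unfolding orbit_space_def openin_subtopology by blast
          have "q \<in> O'" using Ob O'(2) by blast
          have Hq: "\<forall>z\<in>O'. \<exists>U. finite {i. U i \<noteq> topspace X} \<and> (\<forall>i. openin X (U i)) \<and> z \<in> PiE UNIV U \<and> PiE UNIV U \<subseteq> O'"
            using O'(1) by (simp add: openin_product_topology_alt)
          then obtain Of where Of: "finite {i. Of i \<noteq> topspace X}" "\<And>i. openin X (Of i)"
            "q \<in> PiE UNIV Of" "PiE UNIV Of \<subseteq> O'"
              using Hq[rule_format, OF \<open>q \<in> O'\<close>] by blast
          define F' where "F' = {i. Of i \<noteq> topspace X}"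
          have "q 0 \<in> Of 0" using Of(3) by (simp add: PiE_iff)
          then have "y \<in> Of 0" using q(2)[of 0] by simp
          then obtain z where z: "z \<in> Uf 0" "z \<in> Of 0"
            using y Of(2) unfolding in_closure_of by blast
          define t where "t i = (if i = 0 then z else if i \<in> F then p i else q i)" for i
          have tt: "t i \<in> topspace X" for i
            using z(1) openin_subset[OF Uf(2)[of 0]] orbit_topspace[OF K p(1)] orbit_topspace[OF K q(1)]
            unfolding t_def by auto
          have cM: "countable (F \<union> F' \<union> {0})" using Uf(1) Of(1)
            unfolding F_def F'_def by (simp add: countable_finite)
          have "\<exists>r\<in>?O. \<forall>i\<in>F \<union> F' \<union> {0}. r i = t i"
            by (rule korovin_exists[OF K cM]) (rule tt)
          then obtain r where r1: "r \<in> ?O" and r2: "\<forall>i\<in>F \<union> F' \<union> {0}. r i = t i"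
            by blast
          have r: "r \<in> ?O" "\<And>i. i \<in> F \<union> F' \<union> {0} \<Longrightarrow> r i = t i"
            using r1 r2 by auto
          have rU: "r \<in> PiE UNIV Uf"
          proof -
            have "r i \<in> Uf i" for i
            proof (cases "i \<in> F \<union> F' \<union> {0}")
              case True
              have ri: "r i = t i" using r(2)[OF True] .
              show ?thesis
              proof (cases "i = 0")
                case True then show ?thesis using ri z unfolding t_def by simp
              next
                case n0: False
                show ?thesis
                proof (cases "i \<in> F")
                  case True then show ?thesis using ri n0 Uf(3) unfolding t_def by auto
                next
                  case False
                  then have "Uf i = topspace X" unfolding F_def by simp
                  then show ?thesis using ri n0 False orbit_topspace[OF K q(1)] unfolding t_def by simp
                qed
              qed
            next
              case False
              then show ?thesis using orbit_topspace[OF K r(1)] F_def by auto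
            qed
            then show ?thesis by (simp add: PiE_iff)
          qed
          have rO: "r \<in> PiE UNIV Of"
          proof -
            have "r i \<in> Of i" for i
            proof (cases "i \<in> F \<union> F' \<union> {0}")
              case True
              have ri: "r i = t i" using r(2)[OF True] .
              have qi: "q i \<in> Of i" using Of(3) by (simp add: PiE_iff)
              show ?thesis
              proof (cases "i = 0")
                case True then show ?thesis using ri z unfolding t_def by simp
              next
                case n0: False
                show ?thesis
                proof (cases "i \<in> F")
                  case True
                  then have "q i = p i" using q(2)[of i] n0 by simp
                  then show ?thesis using ri n0 True qi unfolding t_def by simp
                next
                  case False
                  then show ?thesis using ri n0 qi unfolding t_def by simp
                qed
              qed
            next
              case False
              then show ?thesis using orbit_topspace[OF K r(1)] F'_def by auto
            qed
            then show ?thesis by (simp add: PiE_iff)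
          qed
          show "\<exists>y. y \<in> V \<and> y \<in> Ob"
            using rU rO r(1) Uf(4) Of(4) T0(2) O'(2) by blast
        qed
        then have "q \<in> W" using V(3) by blast
        then show "y \<in> U" unfolding W_def using q(2)[of 0] by simp
      qed
    qed
  qed
qed

end
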